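(* Under the hypotheses and notation of the Hankel matrix representation below, the $2^N\times2^{N-1}$ submatrix $\mathbf H(:,1{:}2^{N-1})$ consisting of the first $2^{N-1}$ columns of $\mathbf H$ satisfies $$\mathbf H(:,1{:}2^{N-1})=\sum_{t_1}\cdots\sum_{t_{N-1}}\mathbf H^{(N)}_{1,t_{N-1}}(:,1)\otimes\mathbf H^{(N-1)}_{t_{N-1},t_{N-2}}\otimes\cdots\otimes\mathbf H^{(1)}_{t_1,1},$$ where $\mathbf H^{(N)}_{1,t_{N-1}}(:,1)\in\mathbb R^{2\times1}$ is the first column of $\mathbf H^{(N)}_{1,t_{N-1}}$.
   Context: Setting: $N\ge2$; $\mathbf s=[s_1,\dots,s_{2^N}]^{\mathrm T}$ given in TT format $s_{(k_1,\dots,k_N)}=\sum_{r_1=1}^{R_1}\cdots\sum_{r_{N-1}=1}^{R_{N-1}}s^{(1)}_{1,k_1,r_1}s^{(2)}_{r_1,k_2,r_2}\cdots s^{(N)}_{r_{N-1},k_N,1}$ ($k_m\in\{1,2\}$, $R_0=R_N=1$), where $(k_1,\dots,k_N)=k_1+2(k_2-1)+\cdots+2^{N-1}(k_N-1)$. $\mathbf H\in\mathbb R^{2^N\times2^N}$ has entries $\mathbf H_{ij}=s_{2^N+1-i-j}$ if $i+j\le2^N$ and $0$ otherwise. With $\mathbf P=\begin{bmatrix}0&1\\1&0\end{bmatrix}$, $\mathbf Q=\begin{bmatrix}1&0\\0&0\end{bmatrix}$, $\mathbf R=\begin{bmatrix}0&0\\0&1\end{bmatrix}$, block matrices are $\widetilde{\mathbf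 M}^{(N)}_1=[\mathbf P\ \mathbf Q]$, $\widetilde{\mathbf M}^{(n)}_1=\begin{bmatrix}\mathbf P&\mathbf Q\\\mathbf 0&\mathbf R\end{bmatrix}$ ($2\le n\le N-1$), $\widetilde{\mathbf M}^{(1)}_1=\begin{bmatrix}\mathbf Q\\\mathbf R\end{bmatrix}$, $\widetilde{\mathbf M}^{(N)}_2=[\mathbf Q\ \mathbf 0]$, $\widetilde{\mathbf M}^{(n)}_2=\begin{bmatrix}\mathbf Q&\mathbf 0\\\mathbf R&\mathbf P\end{bmatrix}$ ($2\le n\le N-1$), $\widetilde{\mathbf M}^{(1)}_2=\begin{bmatrix}\mathbf 0\\\mathbf P\end{bmatrix}$; $\mathbf M^{(n)}_{q_n,k,q_{n-1}}$ is the $(q_n,q_{n-1})$-th $2\times2$ block of $\widetilde{\mathbf M}^{(n)}_k$ ($q_N=q_0=1$). For $t_n=(r_n,q_n)\in\{1,\dots,R_n\}\times\{1,2\}$ (with $t_N=t_0=1$ meaning $(1,1)$), $\mathbf H^{(n)}_{(r_n,q_n),(r_{n-1},q_{n-1})}=\sum_{k=1}^2 s^{(n)}_{r_{n-1},k,r_n}\mathbf M^{(n)}_{q_n,k,q_{n-1}}\in\mathbb R^{2\times2}$. $\otimes$ is the Kronecker product, with the index of the right factor varying fastest. Sums over $t_n$ range over all $2R_n$ pairs. *)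

theory Defs
  imports "Jordan_Normal_Form.Matrix"
begin

text \<open>Conventions: all indices are 0-based. The mode index k in {1,2} of the paper is
  k in {0,1} here, the block index q in {1,2} is q in {0,1}, the rank index r in {1..R_n}
  is r in {0..<R n}, and the entry s_i (i in {1..2^N}) is s (i-1).
  A TT core is a function core n r k r' = s^{(n)}_{r+1,k+1,r'+1}.\<close>

definition kron :: "real mat \<Rightarrow> real mat \<Rightarrow> real mat" where
  "kron A B = mat (dim_row A * dim_row B) (dim_col A * dim_col B)
     (\<lambda>(i,j). A $$ (i div dim_row B, j div dim_col B) * B $$ (i mod dim_row B, j mod dim_col B))"

definition kron_list :: "real mat list \<Rightarrow> real mat" where
  "kron_list As = foldr kron As (1\<^sub>m 1)"

definition msum :: "nat \<Rightarrow> nat \<Rightarrow> ('i \<Rightarrow> real mat) \<Rightarrow> 'i set \<Rightarrow> real mat" where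
  "msum nr nc f I = mat nr nc (\<lambda>ij. \<Sum>a\<in>I. f a $$ ij)"

text \<open>Admissible TT rank multi-indices (r_0,...,r_N) with r_0 = r_N = 0 (i.e. 1 in the paper);
  entries beyond N are fixed to 0.\<close>
definition rank_idx :: "nat \<Rightarrow> (nat \<Rightarrow> nat) \<Rightarrow> (nat \<Rightarrow> nat) set" where
  "rank_idx N R = {r. r 0 = 0 \<and> (\<forall>n. 0 < n \<and> n < N \<longrightarrow> r n < R n) \<and> (\<forall>n\<ge>N. r n = 0)}"

definition tt_entry :: "nat \<Rightarrow> (nat \<Rightarrow> nat) \<Rightarrow> (nat \<Rightarrow> nat \<Rightarrow> nat \<Rightarrow> nat \<Rightarrow> real)
                        \<Rightarrow> (nat \<Rightarrow> nat) \<Rightarrow> real" where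
  "tt_entry N R core k = (\<Sum>r\<in>rank_idx N R. \<Prod>n\<in>{1..N}. core n (r (n-1)) (k n) (r n))"

definition tt_vec :: "nat \<Rightarrow> (nat \<Rightarrow> nat) \<Rightarrow> (nat \<Rightarrow> nat \<Rightarrow> nat \<Rightarrow> nat \<Rightarrow> real) \<Rightarrow> nat \<Rightarrow> real" where
  "tt_vec N R core i = tt_entry N R core (\<lambda>m. (i div 2 ^ (m - 1)) mod 2)"

text \<open>The Hankel matrix H (2^N x 2^N): H_{ij} = s_{2^N+1-i-j} if i+j \<le> 2^N (1-based), else 0.\<close>
definition hankel :: "nat \<Rightarrow> (nat \<Rightarrow> real) \<Rightarrow> real mat" where
  "hankel N s = mat (2^N) (2^N)
     (\<lambda>(i,j). if i + j + 2 \<le> 2^N then s (2^N - 2 - i - j) else 0)"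

definition first_cols :: "nat \<Rightarrow> real mat \<Rightarrow> real mat" where
  "first_cols c A = mat (dim_row A) c (\<lambda>ij. A $$ ij)"

definition Pm :: "real mat" where "Pm = mat_of_rows_list 2 [[0,1],[1,0]]"
definition Qm :: "real mat" where "Qm = mat_of_rows_list 2 [[1,0],[0,0]]"
definition Rm :: "real mat" where "Rm = mat_of_rows_list 2 [[0,0],[0,1]]"

text \<open>Mblk N n k q q' = the (q+1,q'+1)-th 2x2 block of \<open>M~^{(n)}_{k+1}\<close>.\<close>
definition Mblk :: "nat \<Rightarrow> nat \<Rightarrow> nat \<Rightarrow> nat \<Rightarrow> nat \<Rightarrow> real mat" where
  "Mblk N n k q q' =
    (if n = N then
       (if k = 0 then (if q' = 0 then Pm else Qm) else (if q' = 0 then Qm else 0\<^sub>m 2 2))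
     else if n = 1 then
       (if k = 0 then (if q = 0 then Qm else Rm) else (if q = 0 then 0\<^sub>m 2 2 else Pm))
     else
       (if k = 0 then
          (if q = 0 then (if q' = 0 then Pm else Qm) else (if q' = 0 then 0\<^sub>m 2 2 else Rm))
        else
          (if q = 0 then (if q' = 0 then Qm else 0\<^sub>m 2 2) else (if q' = 0 then Rm else Pm))))"

definition Hcore :: "nat \<Rightarrow> (nat \<Rightarrow> nat \<Rightarrow> nat \<Rightarrow> nat \<Rightarrow> real) \<Rightarrow> nat \<Rightarrow> nat \<times> nat \<Rightarrow> nat \<times> nat \<Rightarrow> real mat" where
  "Hcore N core n t t' =
     core n (fst t') 0 (fst t) \<cdot>\<^sub>m Mblk N n 0 (snd t) (snd t')
   + core n (fst t') 1 (fst t) \<cdot>\<^sub>m Mblk N n 1 (snd t) (snd t')"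

definition t_idx :: "nat \<Rightarrow> (nat \<Rightarrow> nat) \<Rightarrow> (nat \<Rightarrow> nat \<times> nat) set" where
  "t_idx N R = {t. t 0 = (0,0) \<and> (\<forall>n. 0 < n \<and> n < N \<longrightarrow> fst (t n) < R n \<and> snd (t n) < 2)
                   \<and> (\<forall>n\<ge>N. t n = (0,0))}"

definition first_col :: "real mat \<Rightarrow> real mat" where
  "first_col A = mat (dim_row A) 1 (\<lambda>(i,_). A $$ (i,0))"

end

theory Submission
  imports Defs "HOL-Library.FuncSet"
begin

definition dg :: "nat \<Rightarrow> nat \<Rightarrow> nat" where "dg n x = x div 2^(n-1) mod 2"

lemma lowbits: "k < m \<Longrightarrow> (a + c * 2^m) div 2^k mod 2 = a div 2^k mod (2::nat)"
proof -
  assume km: "k < m"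
  have "(2::nat)^m = 2^(m-k) * 2^k" using km by (simp add: power_add[symmetric])
  then have "a + c * 2^m = a + (c*2^(m-k)) * 2^k" by (simp add: mult.assoc)
  moreover have "(a + (c*2^(m-k)) * 2^k) div 2^k = a div 2^k + c*2^(m-k)" by simp
  ultimately have "(a + c * 2^m) div 2^k = a div 2^k + c*2^(m-k)" by (simp only:)
  moreover have "even (c*2^(m-k))" using km by simp
  ultimately show ?thesis by (metis mod_add_left_eq even_iff_mod_2_eq_zero add_0_right mod_add_right_eq mod_mod_trivial)
qed

lemma dg_mod: "1 \<le> n \<Longrightarrow> n \<le> m \<Longrightarrow> dg n (i mod 2^m) = dg n i"
proof -
  assume "1 \<le> n" "n \<le> m"
  then have "n - 1 < m" by simp
  have "dg n i = dg n (i mod 2^m + (i div 2^m) * 2^m)" by (simp add: mod_div_mult_eq)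
  also have "\<dots> = dg n (i mod 2^m)" unfolding dg_def using lowbits[OF \<open>n-1<m\<close>] by simp
  finally show ?thesis by simp
qed

lemma dg_sum: "(\<Sum>n\<in>{1..m}. dg n x * 2^(n-1)) = x mod 2^m"
proof (induction m)
  case 0 then show ?case by simp
next
  case (Suc m)
  have "x mod 2^(Suc m) = x mod (2^m * 2)" by (simp add: mult.commute)
  also have "\<dots> = 2^m * (x div 2^m mod 2) + x mod 2^m" by (rule mod_mult2_eq)
  finally show ?case using Suc by (simp add: dg_def)
qed

lemma dg_extract:
  assumes "\<forall>n\<in>{1..m}. k n < 2"
  shows "n \<in> {1..m} \<Longrightarrow> dg n (\<Sum>l\<in>{1..m}. k l * 2^(l-1)) = k n"
    and "(\<Sum>l\<in>{1..m}. k l * 2^(l-1)) < 2^m"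
  using assms
proof (induction m arbitrary: n)
  case 0 case 1 then show ?case by simp
next
  case 0 case 2 then show ?case by simp
next
  case (Suc m)
  {
    case 1
    have s: "(\<Sum>l\<in>{1..Suc m}. k l * 2^(l-1)) = (\<Sum>l\<in>{1..m}. k l * 2^(l-1)) + k (Suc m) * 2^m"
      by simp
    show ?case
    proof (cases "n = Suc m")
      case True
      have lt: "(\<Sum>l\<in>{1..m}. k l * 2^(l-1)) < 2^m" using Suc.IH(2) 1 by simp
      have "k (Suc m) < 2" using 1 by simp
      then show ?thesis unfolding dg_def s True using lt by simp
    next
      case False
      then have n: "n \<in> {1..m}" using 1 by simp
      have "n - 1 < m" using n by auto
      then show ?thesis unfolding s using lowbits[of "n-1" m] Suc.IH(1)[OF n] 1
        by (simp add: dg_def)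
    qed
  next
    case 2
    have lt: "(\<Sum>l\<in>{1..m}. k l * 2^(l-1)) < 2^m" using Suc.IH(2) 2 by simp
    have "k (Suc m) \<le> 1" using 2 by (metis atLeastAtMost_iff le_add1 less_Suc_eq_le one_add_one order_refl plus_1_eq_Suc)
    then have "k (Suc m) * 2^m \<le> 2^m" by simp
    moreover have "(\<Sum>l\<in>{1..Suc m}. k l * 2^(l-1)) = (\<Sum>l\<in>{1..m}. k l * 2^(l-1)) + k (Suc m) * 2^m"
      by simp
    moreover have "(2::nat)^Suc m = 2^m + 2^m" by simp
    ultimately show ?case using lt by linarith
  }
qed

lemma chain:
  fixes a b k c :: "nat \<Rightarrow> nat"
  assumes "\<forall>n\<in>{1..N}. a n + b n + k n + c (n-1) = 1 + 2 * c n" "c 0 = 1"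
  shows "m \<le> N \<Longrightarrow> (\<Sum>n\<in>{1..m}. (a n + b n + k n) * 2^(n-1)) + 2 = 2^m * (1 + c m)"
proof (induction m)
  case 0 then show ?case using assms by simp
next
  case (Suc m)
  have e: "a (Suc m) + b (Suc m) + k (Suc m) + c m = 1 + 2 * c (Suc m)"
    using assms(1) Suc.prems by force
  have "(\<Sum>n\<in>{1..Suc m}. (a n + b n + k n) * 2^(n-1)) + 2
     = (\<Sum>n\<in>{1..m}. (a n + b n + k n) * 2^(n-1)) + 2 + (a (Suc m) + b (Suc m) + k (Suc m)) * 2^m"
    by simp
  also have "\<dots> = 2^m * (1 + c m) + (a (Suc m) + b (Suc m) + k (Suc m)) * 2^m"
    using Suc by simp
  also have "\<dots> = 2^m * (1 + (a (Suc m) + b (Suc m) + k (Suc m) + c m))" by (simp add: algebra_simps)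
  also have "\<dots> = 2^Suc m * (1 + c (Suc m))" using e by (simp add: algebra_simps)
  finally show ?case .
qed

definition Qset :: "nat \<Rightarrow> (nat \<Rightarrow> nat) set" where
  "Qset N = {q. q 0 = 0 \<and> (\<forall>n. 0 < n \<and> n < N \<longrightarrow> q n < 2) \<and> (\<forall>n\<ge>N. q n = 0)}"
definition ec :: "(nat \<Rightarrow> nat) \<Rightarrow> nat \<Rightarrow> nat" where "ec q m = (if m = 0 then 1 else q m)"
definition Ef :: "nat \<Rightarrow> nat \<Rightarrow> nat \<Rightarrow> nat \<Rightarrow> nat \<Rightarrow> real" where
  "Ef a b k c c' = (if a + b + k + c = 1 + 2 * c' then 1 else 0)"

lemma Qset_finite: "finite (Qset N)"
proof (rule finite_subset)
  show "Qset N \<subseteq> (\<lambda>f n. if n < N then f n else 0) ` PiE {..<N} (\<lambda>_. {0..<2})"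
  proof
    fix q assume q: "q \<in> Qset N"
    show "q \<in> (\<lambda>f n. if n < N then f n else 0) ` PiE {..<N} (\<lambda>_. {0..<2})"
    proof
      show "q = (\<lambda>n. if n < N then restrict q {..<N} n else 0)"
      proof
        fix n show "q n = (if n < N then restrict q {..<N} n else 0)"
          using q unfolding Qset_def by simp
      qed
      show "restrict q {..<N} \<in> PiE {..<N} (\<lambda>_. {0..<2})"
      proof -
        have "\<forall>n<N. q n < 2"
        proof (intro allI impI)
          fix n assume "n < N" then show "q n < 2" using q unfolding Qset_def by (cases "n = 0") auto
        qed
        then show ?thesis by auto
      qed
    qed
  qed
  show "finite ((\<lambda>f n. if n < N then f n else 0) ` PiE {..<N} (\<lambda>_. {0..<2::nat}))"
    by (intro finite_imageI finite_PiE) auto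
qed

lemma key_unique:
  fixes kk :: "nat \<Rightarrow> nat"
  assumes "N \<ge> 1" and q: "q \<in> Qset N" and q': "q' \<in> Qset N"
    and P: "\<forall>n\<in>{1..N}. dg n i + dg n j + kk n + ec q (n-1) = 1 + 2 * q n"
    and P': "\<forall>n\<in>{1..N}. dg n i + dg n j + kk n + ec q' (n-1) = 1 + 2 * q' n"
  shows "q = q'"
proof
  fix m
  have c1: "\<forall>n\<in>{1..N}. dg n i + dg n j + kk n + ec q (n-1) = 1 + 2 * ec q n"
    using P by (auto simp: ec_def)
  have c2: "\<forall>n\<in>{1..N}. dg n i + dg n j + kk n + ec q' (n-1) = 1 + 2 * ec q' n"
    using P' by (auto simp: ec_def)
  show "q m = q' m"
  proof (cases "0 < m \<and> m < N")
    case True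
    have "2^m * (1 + ec q m) = 2^m * (1 + ec q' m)"
      using chain[OF c1, of m] chain[OF c2, of m] True by (simp add: ec_def)
    then show ?thesis using True by (simp add: ec_def)
  next
    case False
    then show ?thesis using q q' by (auto simp: Qset_def)
  qed
qed

lemma key_forward:
  fixes kk :: "nat \<Rightarrow> nat"
  assumes "N \<ge> 1" and i: "i < 2^N" and j: "j < 2^N" and kk: "\<forall>n\<in>{1..N}. kk n < 2"
    and q: "q \<in> Qset N"
    and P: "\<forall>n\<in>{1..N}. dg n i + dg n j + kk n + ec q (n-1) = 1 + 2 * q n"
  shows "i + j + 2 \<le> 2^N \<and> (\<forall>n\<in>{1..N}. kk n = dg n (2^N - 2 - i - j))"
proof -
  have c1: "\<forall>n\<in>{1..N}. dg n i + dg n j + kk n + ec q (n-1) = 1 + 2 * ec q n"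
    using P by (auto simp: ec_def)
  have "ec q N = 0" using q assms(1) by (simp add: ec_def Qset_def)
  then have "(\<Sum>n\<in>{1..N}. (dg n i + dg n j + kk n) * 2^(n-1)) + 2 = 2^N"
    using chain[OF c1, of N] by (simp add: ec_def)
  moreover have "(\<Sum>n\<in>{1..N}. (dg n i + dg n j + kk n) * 2^(n-1)) =
     (\<Sum>n\<in>{1..N}. dg n i * 2^(n-1)) + (\<Sum>n\<in>{1..N}. dg n j * 2^(n-1)) + (\<Sum>n\<in>{1..N}. kk n * 2^(n-1))"
    by (simp add: sum.distrib algebra_simps)
  moreover have "(\<Sum>n\<in>{1..N}. dg n i * 2^(n-1)) = i" using dg_sum[where m=N and x=i] i by simp
  moreover have "(\<Sum>n\<in>{1..N}. dg n j * 2^(n-1)) = j" using dg_sum[where m=N and x=j] j by simp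
  ultimately have e: "i + j + (\<Sum>n\<in>{1..N}. kk n * 2^(n-1)) + 2 = 2^N"
    by linarith
  then have x: "2^N - 2 - i - j = (\<Sum>n\<in>{1..N}. kk n * 2^(n-1))" by linarith
  show ?thesis using e x dg_extract(1)[OF kk] by auto
qed

definition cc :: "nat \<Rightarrow> nat \<Rightarrow> nat \<Rightarrow> nat \<Rightarrow> nat" where
  "cc i j x m = (i mod 2^m + j mod 2^m + x mod 2^m + 2) div 2^m - 1"

lemma cc_prop:
  assumes e: "i + j + x + 2 = 2^N" and m: "m \<le> N"
  shows "i mod 2^m + j mod 2^m + x mod 2^m + 2 = 2^m * (1 + cc i j x m) \<and> cc i j x m \<le> 1"
proof -
  define S where "S = i mod 2^m + j mod 2^m + x mod 2^m"
  have eq: "i + j + x + 2 = (S + 2) + 2^m * (i div 2^m + j div 2^m + x div 2^m)"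
    unfolding S_def using div_mult_mod_eq[of i "2^m"] div_mult_mod_eq[of j "2^m"] div_mult_mod_eq[of x "2^m"]
    by (simp add: algebra_simps)
  have "(i + j + x + 2) mod 2^m = ((S + 2) + 2^m * (i div 2^m + j div 2^m + x div 2^m)) mod 2^m"
    by (simp only: eq)
  also have "\<dots> = (S + 2) mod 2^m" by (rule mod_mult_self2)
  finally have "(S + 2) mod 2^m = (i + j + x + 2) mod 2^m" by simp
  also have "\<dots> = 0" using e m by (simp add: le_imp_power_dvd)
  finally have d: "(S + 2) mod 2^m = 0" .
  define Q where "Q = (S + 2) div 2^m"
  have SQ: "S + 2 = 2^m * Q" using d div_mult_mod_eq[of "S+2" "2^m"] unfolding Q_def by (simp add: mult.commute)
  have "i mod 2^m < 2^m" "j mod 2^m < 2^m" "x mod 2^m < 2^m" by simp_all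
  then have "S + 3 \<le> 3 * 2^m" unfolding S_def by linarith
  moreover have "(3::nat) * 2^m = 2^m * 3" by simp
  ultimately have "2^m * Q < 2^m * 3" using SQ by linarith
  then have Q2: "Q \<le> 2" by (subst (asm) mult_less_cancel1) simp
  have Q1: "Q \<ge> 1" using SQ by (cases Q) auto
  have "cc i j x m = Q - 1" unfolding cc_def Q_def S_def by simp
  then show ?thesis using SQ Q1 Q2 unfolding S_def by simp
qed

lemma mod_split2: "(y::nat) mod 2^Suc m = y mod 2^m + dg (Suc m) y * 2^m"
proof -
  have "y mod 2^(Suc m) = y mod (2^m * 2)" by (simp add: mult.commute)
  also have "\<dots> = 2^m * (y div 2^m mod 2) + y mod 2^m" by (rule mod_mult2_eq)
  finally show ?thesis by (simp add: dg_def)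
qed

lemma key_exist:
  fixes kk :: "nat \<Rightarrow> nat"
  assumes N: "N \<ge> 1" and i: "i < 2^N" and j: "j < 2^N" and ij: "i + j + 2 \<le> 2^N"
    and kk: "\<forall>n\<in>{1..N}. kk n = dg n (2^N - 2 - i - j)"
  shows "\<exists>q\<in>Qset N. \<forall>n\<in>{1..N}. dg n i + dg n j + kk n + ec q (n-1) = 1 + 2 * q n"
proof -
  define x where "x = 2^N - 2 - i - j"
  have e: "i + j + x + 2 = 2^N" unfolding x_def using ij by simp
  have x: "x < 2^N" using e by simp
  define q where "q n = (if 0 < n \<and> n < N then cc i j x n else 0)" for n
  have cN: "cc i j x N = 0"
  proof -
    have "i mod 2^N + j mod 2^N + x mod 2^N + 2 = 2^N * (1 + cc i j x N)"
      using cc_prop[OF e, of N] by simp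
    then have "2^N * 1 = 2^N * (1 + cc i j x N)" using i j x e by simp
    then show ?thesis by (subst (asm) mult_left_cancel) auto
  qed
  have c0: "cc i j x 0 = 1" by (simp add: cc_def)
  have ecq: "ec q m = cc i j x m" if "m < N" for m
    using that c0 by (simp add: ec_def q_def)
  have qn: "q n = cc i j x n" if "1 \<le> n" "n \<le> N" for n
    using that cN by (auto simp: q_def)
  have "q \<in> Qset N"
    unfolding Qset_def
  proof (intro CollectI conjI allI impI)
    show "q 0 = 0" by (simp add: q_def)
    fix n
    show "0 < n \<and> n < N \<Longrightarrow> q n < 2" using cc_prop[OF e, of n] by (simp add: q_def)
    show "N \<le> n \<Longrightarrow> q n = 0" by (simp add: q_def)
  qed
  moreover have "\<forall>n\<in>{1..N}. dg n i + dg n j + kk n + ec q (n-1) = 1 + 2 * q n"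
  proof
    fix n assume n: "n \<in> {1..N}"
    then obtain m where m: "n = Suc m" "m < N" by (cases n) auto
    let ?D = "dg n i + dg n j + dg n x"
    have a1: "i mod 2^m + j mod 2^m + x mod 2^m + 2 = 2^m * (1 + cc i j x m)"
      using cc_prop[OF e, of m] m by simp
    have a2: "i mod 2^n + j mod 2^n + x mod 2^n + 2 = 2^n * (1 + cc i j x n)"
      using cc_prop[OF e, of n] n by simp
    have "i mod 2^n + j mod 2^n + x mod 2^n = i mod 2^m + j mod 2^m + x mod 2^m + ?D * 2^m"
      unfolding m(1) mod_split2 by (simp add: algebra_simps)
    then have "2^m * (2 * (1 + cc i j x n)) = 2^m * (1 + cc i j x m + ?D)"
      using a1 a2 m(1) by (simp add: algebra_simps)
    moreover have nz: "(2::nat)^m \<noteq> 0" by simp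
    ultimately have "2 * (1 + cc i j x n) = 1 + cc i j x m + ?D"
      using mult_left_cancel[OF nz] by blast
    moreover have "kk n = dg n x" using kk n by (simp add: x_def)
    ultimately show "dg n i + dg n j + kk n + ec q (n-1) = 1 + 2 * q n"
      using ecq[OF m(2)] qn n m(1) by simp
  qed
  ultimately show ?thesis by blast
qed

lemma key_sum:
  fixes kk :: "nat \<Rightarrow> nat"
  assumes N: "N \<ge> 1" and i: "i < 2^N" and j: "j < 2^N" and kk: "\<forall>n\<in>{1..N}. kk n < 2"
  shows "(\<Sum>q\<in>Qset N. \<Prod>n\<in>{1..N}. Ef (dg n i) (dg n j) (kk n) (ec q (n-1)) (q n)) =
         (if i + j + 2 \<le> 2^N \<and> (\<forall>n\<in>{1..N}. kk n = dg n (2^N - 2 - i - j)) then 1 else 0)"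
proof -
  define P where "P q = (\<forall>n\<in>{1..N}. dg n i + dg n j + kk n + ec q (n-1) = 1 + 2 * q n)" for q
  have pr: "(\<Prod>n\<in>{1..N}. Ef (dg n i) (dg n j) (kk n) (ec q (n-1)) (q n)) = (if P q then 1 else 0)" for q
  proof (cases "P q")
    case True
    then have "(\<Prod>n\<in>{1..N}. Ef (dg n i) (dg n j) (kk n) (ec q (n-1)) (q n)) = (\<Prod>n\<in>{1..N}. 1)"
      by (intro prod.cong) (auto simp: P_def Ef_def)
    then show ?thesis using True by simp
  next
    case False
    then obtain n where n: "n \<in> {1..N}" "dg n i + dg n j + kk n + ec q (n-1) \<noteq> 1 + 2 * q n"
      unfolding P_def by blast
    then have "Ef (dg n i) (dg n j) (kk n) (ec q (n-1)) (q n) = 0" by (simp add: Ef_def)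
    then have "(\<Prod>n\<in>{1..N}. Ef (dg n i) (dg n j) (kk n) (ec q (n-1)) (q n)) = 0"
      using n(1) by (intro prod_zero) auto
    then show ?thesis using False by simp
  qed
  have "(\<Sum>q\<in>Qset N. \<Prod>n\<in>{1..N}. Ef (dg n i) (dg n j) (kk n) (ec q (n-1)) (q n)) =
        (\<Sum>q\<in>Qset N. if P q then 1 else 0)" using pr by simp
  also have "\<dots> = (if i + j + 2 \<le> 2^N \<and> (\<forall>n\<in>{1..N}. kk n = dg n (2^N - 2 - i - j)) then 1 else 0)"
  proof (cases "i + j + 2 \<le> 2^N \<and> (\<forall>n\<in>{1..N}. kk n = dg n (2^N - 2 - i - j))")
    case True
    then obtain q0 where q0: "q0 \<in> Qset N" "P q0"
      using key_exist[OF N i j] unfolding P_def by blast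
    have "(\<Sum>q\<in>Qset N. if P q then 1 else 0) = (\<Sum>q\<in>Qset N. if q = q0 then 1 else (0::real))"
    proof (rule sum.cong)
      fix q assume q: "q \<in> Qset N"
      have "P q \<longleftrightarrow> q = q0"
        using key_unique[OF N q q0(1)] q0(2) unfolding P_def by blast
      then show "(if P q then 1 else 0) = (if q = q0 then 1 else (0::real))" by simp
    qed simp
    also have "\<dots> = 1" using q0(1) Qset_finite by simp
    finally show ?thesis using True by simp
  next
    case False
    have "\<not> P q" if "q \<in> Qset N" for q
      using key_forward[OF N i j kk that] False unfolding P_def by blast
    then show ?thesis using False by simp
  qed
  finally show ?thesis .
qed

lemma less2: "(a::nat) < 2 \<Longrightarrow> a = 0 \<or> a = 1" by auto

lemma PQR_dims[simp]:
  "dim_row Pm = 2" "dim_col Pm = 2" "dim_row Qm = 2" "dim_col Qm = 2" "dim_row Rm = 2" "dim_col Rm = 2"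
  by (simp_all add: Pm_def Qm_def Rm_def mat_of_rows_list_def)

lemma PQR_idx:
  assumes "a < 2" "b < 2"
  shows "Pm $$ (a,b) = (if a + b = 1 then 1 else 0)"
    "Qm $$ (a,b) = (if a = 0 \<and> b = 0 then 1 else 0)"
    "Rm $$ (a,b) = (if a = 1 \<and> b = 1 then 1 else 0)"
  using less2[OF assms(1)] less2[OF assms(2)]
  by (auto simp: Pm_def Qm_def Rm_def mat_of_rows_list_def)

lemma Mblk_dims[simp]: "dim_row (Mblk N n k q q') = 2" "dim_col (Mblk N n k q q') = 2"
  by (simp_all add: Mblk_def)

lemma Mblk_mid:
  assumes "1 < n" "n < N" "a < 2" "b < 2" "k < 2" "q < 2" "q' < 2"
  shows "Mblk N n k q q' $$ (a,b) = Ef a b k q' q"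
  using assms less2[OF assms(3)] less2[OF assms(4)] less2[OF assms(5)] less2[OF assms(6)] less2[OF assms(7)]
  by (auto simp: Mblk_def PQR_idx Ef_def)

lemma Mblk_first:
  assumes "1 < N" "a < 2" "b < 2" "k < 2" "q < 2"
  shows "Mblk N 1 k q q' $$ (a,b) = Ef a b k 1 q"
  using assms less2[OF assms(2)] less2[OF assms(3)] less2[OF assms(4)] less2[OF assms(5)]
  by (auto simp: Mblk_def PQR_idx Ef_def)

lemma Mblk_last:
  assumes "a < 2" "b < 2" "k < 2" "q' < 2"
  shows "Mblk N N k q q' $$ (a,b) = Ef a b k q' 0"
  using assms less2[OF assms(1)] less2[OF assms(2)] less2[OF assms(3)] less2[OF assms(4)]
  by (auto simp: Mblk_def PQR_idx Ef_def)

lemma Mblk_Q: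
  assumes "N \<ge> 2" "1 \<le> n" "n \<le> N" "qq \<in> Qset N" "a < 2" "b < 2" "k < 2"
  shows "Mblk N n k (qq n) (qq (n-1)) $$ (a,b) = Ef a b k (ec qq (n-1)) (qq n)"
proof -
  have qlt: "qq m < 2" for m using assms(4) unfolding Qset_def
    by (cases "m = 0"; cases "m < N") auto
  show ?thesis
  proof (cases "n = N")
    case True
    then have "qq n = 0" "n - 1 \<noteq> 0" using assms(1,4) by (auto simp: Qset_def)
    then show ?thesis using True Mblk_last[OF assms(5,6,7) qlt] by (simp add: ec_def)
  next
    case False
    show ?thesis
    proof (cases "n = 1")
      case True
      then show ?thesis using Mblk_first[OF _ assms(5,6,7) qlt] assms(1) by (simp add: ec_def)
    next
      case False2: False
      then show ?thesis using Mblk_mid[OF _ _ assms(5,6,7) qlt qlt] assms False by (simp add: ec_def)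
    qed
  qed
qed

lemma Hcore_dims[simp]: "dim_row (Hcore N core n t t') = 2" "dim_col (Hcore N core n t t') = 2"
  by (simp_all add: Hcore_def)

lemma Hcore_idx:
  assumes "a < 2" "b < 2"
  shows "Hcore N core n t t' $$ (a,b) = (\<Sum>k\<in>{0,1}. core n (fst t') k (fst t) * Mblk N n k (snd t) (snd t') $$ (a,b))"
  using assms by (simp add: Hcore_def)

lemma kron_dims[simp]: "dim_row (kron A B) = dim_row A * dim_row B" "dim_col (kron A B) = dim_col A * dim_col B"
  by (simp_all add: kron_def)

lemma kron_idx:
  "i < dim_row A * dim_row B \<Longrightarrow> j < dim_col A * dim_col B \<Longrightarrow>
   kron A B $$ (i,j) = A $$ (i div dim_row B, j div dim_col B) * B $$ (i mod dim_row B, j mod dim_col B)"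
  by (simp add: kron_def)

lemma kron_list_Cons: "kron_list (A # As) = kron A (kron_list As)"
  by (simp add: kron_list_def)

lemma dg_top: "i < 2^Suc m \<Longrightarrow> i div 2^m = dg (Suc m) i"
proof -
  assume "i < 2^Suc m"
  then have "i div 2^m < 2" by (simp add: div_less_iff_less_mult mult.commute)
  then show ?thesis by (simp add: dg_def)
qed

lemma KL:
  assumes "\<And>n. dim_row (A n) = 2" "\<And>n. dim_col (A n) = 2"
  shows "dim_row (kron_list (map A (rev [1..<Suc m]))) = 2^m \<and>
         dim_col (kron_list (map A (rev [1..<Suc m]))) = 2^m \<and>
         (\<forall>i j. i < 2^m \<longrightarrow> j < 2^m \<longrightarrow>
            kron_list (map A (rev [1..<Suc m])) $$ (i,j) = (\<Prod>n\<in>{1..m}. A n $$ (dg n i, dg n j)))"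
proof (induction m)
  case 0
  then show ?case by (simp add: kron_list_def)
next
  case (Suc m)
  let ?K = "kron_list (map A (rev [1..<Suc m]))"
  have r: "rev [1..<Suc (Suc m)] = Suc m # rev [1..<Suc m]" by simp
  have K: "kron_list (map A (rev [1..<Suc (Suc m)])) = kron (A (Suc m)) ?K"
    unfolding r by (simp add: kron_list_Cons)
  show ?case
  proof (intro conjI allI impI)
    show "dim_row (kron_list (map A (rev [1..<Suc (Suc m)]))) = 2^Suc m"
      unfolding K using Suc.IH assms by simp
    show "dim_col (kron_list (map A (rev [1..<Suc (Suc m)]))) = 2^Suc m"
      unfolding K using Suc.IH assms by simp
    fix i j :: nat assume i: "i < 2^Suc m" and j: "j < 2^Suc m"
    have "kron_list (map A (rev [1..<Suc (Suc m)])) $$ (i,j) =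
          A (Suc m) $$ (i div 2^m, j div 2^m) * ?K $$ (i mod 2^m, j mod 2^m)"
      unfolding K using Suc.IH assms i j by (simp add: kron_idx)
    also have "?K $$ (i mod 2^m, j mod 2^m) = (\<Prod>n\<in>{1..m}. A n $$ (dg n (i mod 2^m), dg n (j mod 2^m)))"
      using Suc.IH by simp
    also have "\<dots> = (\<Prod>n\<in>{1..m}. A n $$ (dg n i, dg n j))"
      by (intro prod.cong) (auto simp: dg_mod)
    finally show "kron_list (map A (rev [1..<Suc (Suc m)])) $$ (i,j) = (\<Prod>n\<in>{1..Suc m}. A n $$ (dg n i, dg n j))"
      using dg_top[OF i] dg_top[OF j] by (simp add: mult.commute)
  qed
qed

lemma F_entry:
  fixes core :: "nat \<Rightarrow> nat \<Rightarrow> nat \<Rightarrow> nat \<Rightarrow> real" and t :: "nat \<Rightarrow> nat \<times> nat"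
  assumes N: "N \<ge> 2" and i: "i < 2^N" and j: "j < 2^(N-1)"
  defines "F \<equiv> kron_list (first_col (Hcore N core N (t N) (t (N-1)))
                     # map (\<lambda>n. Hcore N core n (t n) (t (n-1))) (rev [1..<N]))"
  shows "dim_row F = 2^N" "dim_col F = 2^(N-1)"
    "F $$ (i,j) = (\<Prod>n\<in>{1..N}. Hcore N core n (t n) (t (n-1)) $$ (dg n i, dg n j))"
proof -
  obtain m where m: "N = Suc m" using N by (cases N) auto
  let ?A = "\<lambda>n. Hcore N core n (t n) (t (n-1))"
  let ?K = "kron_list (map ?A (rev [1..<Suc m]))"
  have KL': "dim_row ?K = 2^m \<and> dim_col ?K = 2^m \<and>
         (\<forall>i j. i < 2^m \<longrightarrow> j < 2^m \<longrightarrow> ?K $$ (i,j) = (\<Prod>n\<in>{1..m}. ?A n $$ (dg n i, dg n j)))"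
    by (rule KL) simp_all
  have Fe: "F = kron (first_col (?A N)) ?K" unfolding F_def m by (simp add: kron_list_Cons)
  have fc: "dim_row (first_col (?A N)) = 2" "dim_col (first_col (?A N)) = 1"
    by (simp_all add: first_col_def)
  show "dim_row F = 2^N" "dim_col F = 2^(N-1)" unfolding Fe using KL' fc m by simp_all
  have i': "i < 2 * 2^m" and j': "j < 2^m" using i j m by simp_all
  have jd: "j div 2^m = 0" "j mod 2^m = j" using j' by simp_all
  have id: "i div 2^m = dg N i" using dg_top[of i m] i m by simp
  have dj: "dg N j = 0" using j' m by (simp add: dg_def)
  have dgl: "dg N i < 2" by (simp add: dg_def)
  have "F $$ (i,j) = first_col (?A N) $$ (i div 2^m, j div 2^m) * ?K $$ (i mod 2^m, j mod 2^m)"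
    unfolding Fe using KL' fc i' j' by (simp add: kron_idx)
  also have "\<dots> = ?A N $$ (dg N i, dg N j) * ?K $$ (i mod 2^m, j)"
    unfolding jd id dj using dgl by (simp add: first_col_def)
  also have "?K $$ (i mod 2^m, j) = (\<Prod>n\<in>{1..m}. ?A n $$ (dg n (i mod 2^m), dg n j))"
    using KL' j' by simp
  also have "\<dots> = (\<Prod>n\<in>{1..m}. ?A n $$ (dg n i, dg n j))"
    by (intro prod.cong) (auto simp: dg_mod)
  finally show "F $$ (i,j) = (\<Prod>n\<in>{1..N}. ?A n $$ (dg n i, dg n j))"
    unfolding m by (simp add: mult.commute)
qed

lemma t_idx_img: "t_idx N R = (\<lambda>(r,q) n. (r n, q n)) ` (rank_idx N R \<times> Qset N)"
proof
  show "t_idx N R \<subseteq> (\<lambda>(r,q) n. (r n, q n)) ` (rank_idx N R \<times> Qset N)"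
  proof
    fix t assume t: "t \<in> t_idx N R"
    have "t = (\<lambda>(r,q) n. (r n, q n)) (fst \<circ> t, snd \<circ> t)" by simp
    moreover have "(fst \<circ> t, snd \<circ> t) \<in> rank_idx N R \<times> Qset N"
      using t by (auto simp: t_idx_def rank_idx_def Qset_def)
    ultimately show "t \<in> (\<lambda>(r,q) n. (r n, q n)) ` (rank_idx N R \<times> Qset N)" by blast
  qed
  show "(\<lambda>(r,q) n. (r n, q n)) ` (rank_idx N R \<times> Qset N) \<subseteq> t_idx N R"
    by (auto simp: t_idx_def rank_idx_def Qset_def)
qed

lemma t_inj: "inj_on (\<lambda>(r,q) n. (r n, q n)) X"
  by (auto simp: inj_on_def fun_eq_iff)

lemma inner:
  fixes core :: "nat \<Rightarrow> nat \<Rightarrow> nat \<Rightarrow> nat \<Rightarrow> real" and r :: "nat \<Rightarrow> nat"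
  assumes N: "N \<ge> 2" and i: "i < 2^N" and j: "j < 2^(N-1)"
  shows "(\<Sum>q\<in>Qset N. \<Prod>n\<in>{1..N}. Hcore N core n (r n, q n) (r (n-1), q (n-1)) $$ (dg n i, dg n j))
       = (if i + j + 2 \<le> 2^N then (\<Prod>n\<in>{1..N}. core n (r (n-1)) (dg n (2^N - 2 - i - j)) (r n)) else 0)"
proof -
  have N1: "N \<ge> 1" using N by simp
  have "(2::nat)^(N-1) \<le> 2^N" by (rule power_increasing) simp_all
  then have j': "j < 2^N" using j by linarith
  let ?PI = "PiE {1..N} (\<lambda>_. {0,1::nat})"
  let ?c = "\<lambda>n k. core n (r (n-1)) k (r n)"
  let ?E = "\<lambda>q n k. Ef (dg n i) (dg n j) k (ec q (n-1)) (q n)"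
  have dgl: "dg n y < 2" for n y by (simp add: dg_def)
  have step1: "(\<Prod>n\<in>{1..N}. Hcore N core n (r n, q n) (r (n-1), q (n-1)) $$ (dg n i, dg n j))
      = (\<Sum>g\<in>?PI. (\<Prod>n\<in>{1..N}. ?c n (g n)) * (\<Prod>n\<in>{1..N}. ?E q n (g n)))" if q: "q \<in> Qset N" for q
  proof -
    have "(\<Prod>n\<in>{1..N}. Hcore N core n (r n, q n) (r (n-1), q (n-1)) $$ (dg n i, dg n j))
        = (\<Prod>n\<in>{1..N}. \<Sum>k\<in>{0,1}. ?c n k * ?E q n k)"
    proof (intro prod.cong refl)
      fix n assume n: "n \<in> {1..N}"
      show "Hcore N core n (r n, q n) (r (n-1), q (n-1)) $$ (dg n i, dg n j) = (\<Sum>k\<in>{0,1}. ?c n k * ?E q n k)"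
        unfolding Hcore_idx[OF dgl dgl] using Mblk_Q[OF N _ _ q dgl dgl, of n] n by simp
    qed
    also have "\<dots> = (\<Sum>g\<in>?PI. \<Prod>n\<in>{1..N}. ?c n (g n) * ?E q n (g n))"
      by (rule prod_sum_PiE) auto
    also have "\<dots> = (\<Sum>g\<in>?PI. (\<Prod>n\<in>{1..N}. ?c n (g n)) * (\<Prod>n\<in>{1..N}. ?E q n (g n)))"
      by (simp add: prod.distrib)
    finally show ?thesis .
  qed
  define x where "x = 2^N - 2 - i - j"
  define g0 where "g0 = restrict (\<lambda>n. dg n x) {1..N}"
  have "dg n x \<in> {0,1}" for n using less2[OF dgl[of n x]] by simp
  then have g0: "g0 \<in> ?PI" unfolding g0_def by auto
  have "(\<Sum>q\<in>Qset N. \<Prod>n\<in>{1..N}. Hcore N core n (r n, q n) (r (n-1), q (n-1)) $$ (dg n i, dg n j))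
      = (\<Sum>q\<in>Qset N. \<Sum>g\<in>?PI. (\<Prod>n\<in>{1..N}. ?c n (g n)) * (\<Prod>n\<in>{1..N}. ?E q n (g n)))"
    using step1 by (intro sum.cong) auto
  also have "\<dots> = (\<Sum>g\<in>?PI. \<Sum>q\<in>Qset N. (\<Prod>n\<in>{1..N}. ?c n (g n)) * (\<Prod>n\<in>{1..N}. ?E q n (g n)))"
    by (rule sum.swap)
  also have "\<dots> = (\<Sum>g\<in>?PI. (\<Prod>n\<in>{1..N}. ?c n (g n)) * (\<Sum>q\<in>Qset N. \<Prod>n\<in>{1..N}. ?E q n (g n)))"
    by (simp add: sum_distrib_left)
  also have "\<dots> = (\<Sum>g\<in>?PI. if g = g0 then (if i + j + 2 \<le> 2^N then (\<Prod>n\<in>{1..N}. ?c n (g n)) else 0) else 0)"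
  proof (intro sum.cong refl)
    fix g assume g: "g \<in> ?PI"
    have gl: "\<forall>n\<in>{1..N}. g n < 2"
    proof
      fix n assume "n \<in> {1..N}"
      then have "g n \<in> {0,1}" using g by (simp add: PiE_iff)
      then show "g n < 2" by auto
    qed
    have eq: "(\<forall>n\<in>{1..N}. g n = dg n x) \<longleftrightarrow> g = g0"
      using g unfolding g0_def by (auto simp: PiE_def extensional_def fun_eq_iff)
    show "(\<Prod>n\<in>{1..N}. ?c n (g n)) * (\<Sum>q\<in>Qset N. \<Prod>n\<in>{1..N}. ?E q n (g n)) =
          (if g = g0 then (if i + j + 2 \<le> 2^N then (\<Prod>n\<in>{1..N}. ?c n (g n)) else 0) else 0)"
      unfolding key_sum[OF N1 i j' gl] x_def[symmetric] eq by auto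
  qed
  also have "\<dots> = (if i + j + 2 \<le> 2^N then (\<Prod>n\<in>{1..N}. ?c n (g0 n)) else 0)"
    using g0 by (simp add: sum.delta finite_PiE)
  also have "(\<Prod>n\<in>{1..N}. ?c n (g0 n)) = (\<Prod>n\<in>{1..N}. ?c n (dg n x))"
    unfolding g0_def by (intro prod.cong) auto
  finally show ?thesis unfolding x_def .
qed

theorem mainTheorem7:
  fixes N :: nat and R :: "nat \<Rightarrow> nat"
    and core :: "nat \<Rightarrow> nat \<Rightarrow> nat \<Rightarrow> nat \<Rightarrow> real"
  assumes "N \<ge> 2"
    and "R 0 = 1" and "R N = 1"
    and "\<forall>n. 0 < n \<and> n < N \<longrightarrow> R n \<ge> 1"
  shows "first_cols (2^(N-1)) (hankel N (tt_vec N R core)) =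
    msum (2^N) (2^(N-1))
      (\<lambda>t. kron_list (first_col (Hcore N core N (t N) (t (N-1)))
                     # map (\<lambda>n. Hcore N core n (t n) (t (n-1))) (rev [1..<N])))
      (t_idx N R)"
proof (rule eq_matI)
  have N: "N \<ge> 2" by fact
  show "dim_row (first_cols (2^(N-1)) (hankel N (tt_vec N R core))) =
        dim_row (msum (2^N) (2^(N-1)) (\<lambda>t. kron_list (first_col (Hcore N core N (t N) (t (N-1)))
                     # map (\<lambda>n. Hcore N core n (t n) (t (n-1))) (rev [1..<N]))) (t_idx N R))"
    by (simp add: first_cols_def hankel_def msum_def)
  show "dim_col (first_cols (2^(N-1)) (hankel N (tt_vec N R core))) =
        dim_col (msum (2^N) (2^(N-1)) (\<lambda>t. kron_list (first_col (Hcore N core N (t N) (t (N-1)))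
                     # map (\<lambda>n. Hcore N core n (t n) (t (n-1))) (rev [1..<N]))) (t_idx N R))"
    by (simp add: first_cols_def hankel_def msum_def)
  fix i j
  assume i: "i < dim_row (msum (2^N) (2^(N-1)) (\<lambda>t. kron_list (first_col (Hcore N core N (t N) (t (N-1)))
                     # map (\<lambda>n. Hcore N core n (t n) (t (n-1))) (rev [1..<N]))) (t_idx N R))"
     and j: "j < dim_col (msum (2^N) (2^(N-1)) (\<lambda>t. kron_list (first_col (Hcore N core N (t N) (t (N-1)))
                     # map (\<lambda>n. Hcore N core n (t n) (t (n-1))) (rev [1..<N]))) (t_idx N R))"
  have i: "i < 2^N" and j: "j < 2^(N-1)" using i j by (simp_all add: msum_def)
  have "(2::nat)^(N-1) \<le> 2^N" by (rule power_increasing) simp_all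
  then have j': "j < 2^N" using j by linarith
  define x where "x = 2^N - 2 - i - j"
  let ?h = "\<lambda>(r::nat\<Rightarrow>nat, q::nat\<Rightarrow>nat) n. (r n, q n)"
  let ?G = "\<lambda>t. \<Prod>n\<in>{1..N}. Hcore N core n (t n) (t (n-1)) $$ (dg n i, dg n j)"
  have "msum (2^N) (2^(N-1)) (\<lambda>t. kron_list (first_col (Hcore N core N (t N) (t (N-1)))
                     # map (\<lambda>n. Hcore N core n (t n) (t (n-1))) (rev [1..<N]))) (t_idx N R) $$ (i,j)
      = (\<Sum>t\<in>t_idx N R. kron_list (first_col (Hcore N core N (t N) (t (N-1)))
                     # map (\<lambda>n. Hcore N core n (t n) (t (n-1))) (rev [1..<N])) $$ (i,j))"
    using i j by (simp add: msum_def)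
  also have "\<dots> = (\<Sum>t\<in>t_idx N R. ?G t)"
    by (intro sum.cong refl) (rule F_entry(3)[OF N i j])
  also have "\<dots> = (\<Sum>rq\<in>rank_idx N R \<times> Qset N. ?G (?h rq))"
    unfolding t_idx_img by (simp add: sum.reindex[OF t_inj])
  also have "\<dots> = (\<Sum>r\<in>rank_idx N R. \<Sum>q\<in>Qset N. ?G (?h (r,q)))"
    unfolding sum.cartesian_product by (intro sum.cong) auto
  also have "\<dots> = (\<Sum>r\<in>rank_idx N R. if i + j + 2 \<le> 2^N then (\<Prod>n\<in>{1..N}. core n (r (n-1)) (dg n x) (r n)) else 0)"
    unfolding x_def by (intro sum.cong refl) (simp only: prod.case inner[OF N i j])
  also have "\<dots> = (if i + j + 2 \<le> 2^N then tt_vec N R core x else 0)"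
    by (simp add: tt_vec_def tt_entry_def dg_def)
  also have "\<dots> = first_cols (2^(N-1)) (hankel N (tt_vec N R core)) $$ (i,j)"
    using i j j' by (simp add: first_cols_def hankel_def x_def)
  finally show "first_cols (2^(N-1)) (hankel N (tt_vec N R core)) $$ (i,j) =
      msum (2^N) (2^(N-1)) (\<lambda>t. kron_list (first_col (Hcore N core N (t N) (t (N-1)))
                     # map (\<lambda>n. Hcore N core n (t n) (t (n-1))) (rev [1..<N]))) (t_idx N R) $$ (i,j)"
    by simp
qed

end
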